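(* Let $H\in\mathbb{R}^{n\times n}$ and $M\in\mathbb{R}^{m\times m}$ be symmetric positive semidefinite and $A\in\mathbb{R}^{m\times n}$. Let $l\neq k$ be indices and $\mathcal{B}\subseteq\{1,\dots,n\}\setminus\{l,k\}$. Assume that the linear system in the unknowns $(\Delta x_l,\Delta x_k,\Delta x_{\mathcal{B}},\Delta y,\Delta z_l,\Delta z_k)$ \[ \begin{aligned} h_{ll}\Delta x_l+h_{kl}\Delta x_k+h_{\mathcal{B}l}^T\Delta x_{\mathcal{B}}-a_l^T\Delta y-\Delta z_l&=0,\\ h_{kl}\Delta x_l+h_{kk}\Delta x_k+h_{\mathcal{B}k}^T\Delta x_{\mathcal{B}}-a_k^T\Delta y-\Delta z_k&=0,\\ h_{\mathcal{B}l}\Delta x_l+h_{\mathcal{B}k}\Delta x_k+H_{\mathcal{B}\mathcal{B}}\Delta x_{\mathcal{B}}-A_{\mathcal{B}}^T\Delta y&=0,\\ a_l\Delta x_l+a_k\Delta x_k+A_{\mathcal{B}}\Delta x_{\mathcal{B}}+M\Delta y&=0,\\ \Delta x_l+\Delta z_l&=1,\\ \Delta x_k&=0 \end{aligned} \] has a unique solution, and that in it $\Delta z_k\neq 0$. Then the matrices \[ K_l=\begin{pmatrix}h_{ll}&h_{\mathcal{B}l}^T&a_l^T\\ h_{\mathcal{B}l}&H_{\mathcal{B}\mathcal{B}}&A_{\mathcal{B}}^T\\ a_l&A_{\mathcal{B}}&-M\end{pmatrix}\quad\text{and}\quad K_k=\begin{pmatrix}h_{kk}&h_{\mathcal{B}k}^T&a_k^T\\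 h_{\mathcal{B}k}&H_{\mathcal{B}\mathcal{B}}&A_{\mathcal{B}}^T\\ a_k&A_{\mathcal{B}}&-M\end{pmatrix} \] are nonsingular.
   Context: $h_{ij}$ denotes the $(i,j)$ entry of $H$; $h_{\mathcal{B}j}$ the column vector $(h_{ij})_{i\in\mathcal{B}}$; $H_{\mathcal{B}\mathcal{B}}$ the principal submatrix of $H$ with rows and columns in $\mathcal{B}$; $a_j$ the $j$th column of $A$; $A_{\mathcal{B}}$ the matrix of columns of $A$ indexed by $\mathcal{B}$. *)

theory Defs
  imports "Jordan_Normal_Form.Matrix"
begin

definition sym_psd :: "real mat \<Rightarrow> nat \<Rightarrow> bool" where
  "sym_psd H n \<longleftrightarrow> H \<in> carrier_mat n n \<and> transpose_mat H = H \<and>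
     (\<forall>x \<in> carrier_vec n. 0 \<le> x \<bullet> (H *\<^sub>v x))"

text \<open>The KKT-type matrix
  K_j = [[h_jj, h_Bj^T, a_j^T], [h_Bj, H_BB, A_B^T], [a_j, A_B, -M]],
  with the indices of B listed in increasing order (bs = sorted B).
  Row/column r < 1 + card B refers to primal index (j if r = 0, else the (r-1)-th
  element of B); r \<ge> 1 + card B refers to the dual index r - 1 - card B.\<close>
definition kkt_mat :: "real mat \<Rightarrow> real mat \<Rightarrow> real mat \<Rightarrow> nat \<Rightarrow> nat set \<Rightarrow> nat \<Rightarrow> real mat" where
  "kkt_mat H A M j B m =
    (let bs = sorted_list_of_set B; p = length bs;
         xi = (\<lambda>r. if r = 0 then j else bs ! (r - 1));
         yi = (\<lambda>r. r - 1 - p)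
     in mat (1 + p + m) (1 + p + m) (\<lambda>(r, c).
          if r < 1 + p \<and> c < 1 + p then H $$ (xi r, xi c)
          else if r < 1 + p then A $$ (yi c, xi r)
          else if c < 1 + p then A $$ (yi r, xi c)
          else - M $$ (yi r, yi c)))"

definition step_system ::
  "real mat \<Rightarrow> real mat \<Rightarrow> real mat \<Rightarrow> nat \<Rightarrow> nat \<Rightarrow> nat set \<Rightarrow> nat \<Rightarrow>
   real \<times> real \<times> real vec \<times> real vec \<times> real \<times> real \<Rightarrow> bool" where
  "step_system H A M l k B m s =
    (case s of (dxl, dxk, dxB, dy, dzl, dzk) \<Rightarrow>
     (let bs = sorted_list_of_set B; p = length bs in
      dxB \<in> carrier_vec p \<and> dy \<in> carrier_vec m \<and>
      H $$ (l, l) * dxl + H $$ (k, l) * dxk + (\<Sum>i<p. H $$ (bs ! i, l) * dxB $ i)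
        - (\<Sum>q<m. A $$ (q, l) * dy $ q) - dzl = 0 \<and>
      H $$ (k, l) * dxl + H $$ (k, k) * dxk + (\<Sum>i<p. H $$ (bs ! i, k) * dxB $ i)
        - (\<Sum>q<m. A $$ (q, k) * dy $ q) - dzk = 0 \<and>
      (\<forall>i<p. H $$ (bs ! i, l) * dxl + H $$ (bs ! i, k) * dxk
        + (\<Sum>i'<p. H $$ (bs ! i, bs ! i') * dxB $ i')
        - (\<Sum>q<m. A $$ (q, bs ! i) * dy $ q) = 0) \<and>
      (\<forall>q<m. A $$ (q, l) * dxl + A $$ (q, k) * dxk
        + (\<Sum>i<p. A $$ (q, bs ! i) * dxB $ i)
        + (\<Sum>q'<m. M $$ (q, q') * dy $ q') = 0) \<and>
      dxl + dzl = 1 \<and>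
      dxk = 0))"

end

theory Submission imports Defs "Jordan_Normal_Form.Determinant" begin

definition qf :: "real mat \<Rightarrow> nat \<Rightarrow> (nat \<Rightarrow> real) \<Rightarrow> real" where
  "qf H n x = (\<Sum>i<n. x i * (\<Sum>j<n. H $$ (i,j) * x j))"

lemma sym_entry: "sym_psd H n \<Longrightarrow> i < n \<Longrightarrow> j < n \<Longrightarrow> H $$ (i,j) = H $$ (j,i)"
  unfolding sym_psd_def by (metis carrier_matD index_transpose_mat(1))

lemma psd_qf: assumes "sym_psd H n" shows "0 \<le> qf H n x"
proof -
  have H: "H \<in> carrier_mat n n" using assms unfolding sym_psd_def by auto
  have "0 \<le> vec n x \<bullet> (H *\<^sub>v vec n x)" using assms unfolding sym_psd_def by auto
  also have "vec n x \<bullet> (H *\<^sub>v vec n x) = qf H n x"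
    unfolding qf_def scalar_prod_def using H
    by (auto simp: lessThan_atLeast0 row_def scalar_prod_def intro!: sum.cong)
  finally show ?thesis .
qed

lemma psd_ker: assumes S: "sym_psd H n" and q0: "qf H n x = 0"
  shows "\<forall>i<n. (\<Sum>j<n. H $$ (i,j) * x j) = 0"
proof -
  define z where "z i = (\<Sum>j<n. H $$ (i,j) * x j)" for i
  define s where "s = (\<Sum>i<n. z i * z i)"
  define q where "q = qf H n z"
  have q: "0 \<le> q" unfolding q_def by (rule psd_qf[OF S])
  have cross: "(\<Sum>i<n. x i * (\<Sum>j<n. H $$ (i,j) * z j)) = s"
  proof -
    have "(\<Sum>i<n. x i * (\<Sum>j<n. H $$ (i,j) * z j)) = (\<Sum>i<n. \<Sum>j<n. z j * (H $$ (j,i) * x i))"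
      by (auto simp: sum_distrib_left sym_entry[OF S] mult_ac intro!: sum.cong)
    also have "\<dots> = (\<Sum>j<n. \<Sum>i<n. z j * (H $$ (j,i) * x i))" by (rule sum.swap)
    also have "\<dots> = s" unfolding s_def z_def by (simp add: sum_distrib_left)
    finally show ?thesis .
  qed
  have cross2: "(\<Sum>i<n. z i * (\<Sum>j<n. H $$ (i,j) * x j)) = s" unfolding s_def z_def by simp
  have exp: "qf H n (\<lambda>i. x i + t * z i) = qf H n x + 2*t*s + t^2 * q" for t
  proof -
    have "qf H n (\<lambda>i. x i + t * z i) = (\<Sum>i<n. x i * (\<Sum>j<n. H $$ (i,j) * x j))
       + t * (\<Sum>i<n. x i * (\<Sum>j<n. H $$ (i,j) * z j))
       + t * (\<Sum>i<n. z i * (\<Sum>j<n. H $$ (i,j) * x j))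
       + t^2 * (\<Sum>i<n. z i * (\<Sum>j<n. H $$ (i,j) * z j))"
      unfolding qf_def
      by (simp add: algebra_simps sum.distrib sum_distrib_left power2_eq_square)
    then show ?thesis unfolding cross cross2 q_def qf_def by simp
  qed
  define t where "t = - s / (q+1)"
  have "0 \<le> 2*t*s + t^2*q" using psd_qf[OF S, of "\<lambda>i. x i + t * z i"] exp q0 by simp
  then have "0 \<le> (2*t*s + t^2*q) * (q+1)^2" using q by simp
  also have "(2*t*s + t^2*q) * (q+1)^2 = 2*s*(t*(q+1))*(q+1) + (t*(q+1))^2*q"
    by (simp add: algebra_simps power2_eq_square)
  also have "t*(q+1) = -s" using q unfolding t_def by simp
  also have "2*s*(-s)*(q+1) + (-s)^2*q = - (s^2 * (q+2))"
    by (simp add: algebra_simps power2_eq_square)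
  finally have "s^2 * (q+2) \<le> 0" by simp
  moreover have "0 \<le> s^2 * (q+2)" using q by simp
  ultimately have "s^2 * (q+2) = 0" by linarith
  then have "s = 0" using q by simp
  then have "\<forall>i\<in>{..<n}. z i * z i = 0" unfolding s_def
    by (subst (asm) sum_nonneg_eq_0_iff) auto
  then show ?thesis unfolding z_def by auto
qed

lemma sum_split: "(\<Sum>c<(a::nat)+(b::nat). g c) = (\<Sum>c<a. g c) + (\<Sum>q<b. (g (a+q)::real))"
  by (induction b) (auto simp: add.assoc)

definition pos :: "nat list \<Rightarrow> nat \<Rightarrow> nat" where
  "pos bs i = (THE c. c < length bs \<and> bs ! c = i)"

lemma pos_nth: "distinct bs \<Longrightarrow> c < length bs \<Longrightarrow> pos bs (bs ! c) = c"
  unfolding pos_def by (rule the_equality) (auto simp: nth_eq_iff_index_eq)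

definition ext :: "nat \<Rightarrow> real \<Rightarrow> nat list \<Rightarrow> (nat \<Rightarrow> real) \<Rightarrow> nat \<Rightarrow> real" where
  "ext j x0 bs xs i = (if i = j then x0 else if i \<in> set bs then xs (pos bs i) else 0)"

lemma ext_sum:
  assumes d: "distinct bs" and j: "j \<notin> set bs" "j < n" and s: "set bs \<subseteq> {..<n}"
  shows "(\<Sum>i<n. f i * ext j x0 bs xs i) = f j * x0 + (\<Sum>c<length bs. f (bs!c) * xs c)"
proof -
  have "(\<Sum>i<n. f i * ext j x0 bs xs i) = (\<Sum>i\<in>insert j (set bs). f i * ext j x0 bs xs i)"
    by (rule sum.mono_neutral_right) (use j s in \<open>auto simp: ext_def\<close>)
  also have "\<dots> = f j * x0 + (\<Sum>i\<in>set bs. f i * ext j x0 bs xs i)"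
    using j by (simp add: ext_def)
  also have "(\<Sum>i\<in>set bs. f i * ext j x0 bs xs i) = (\<Sum>i\<in>(!) bs ` {..<length bs}. f i * ext j x0 bs xs i)"
    by (rule sum.cong) (auto simp: in_set_conv_nth image_iff)
  also have "\<dots> = (\<Sum>c<length bs. f (bs!c) * xs c)"
    by (subst sum.reindex) (use d j in \<open>auto simp: inj_on_def nth_eq_iff_index_eq ext_def pos_nth intro!: sum.cong\<close>)
  finally show ?thesis .
qed

lemma kkt_ker:
  assumes S: "sym_psd H n" and SM: "sym_psd M m" and A: "A \<in> carrier_mat m n"
    and j: "j < n" and Bs: "B \<subseteq> {0..<n} - {j}"
    and v: "v \<in> carrier_vec (1 + card B + m)"
    and Kv: "kkt_mat H A M j B m *\<^sub>v v = 0\<^sub>v (1 + card B + m)"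
    and bs: "bs = sorted_list_of_set B"
    and X: "X = ext j (v$0) bs (\<lambda>c. v$(1+c))" and y: "y = (\<lambda>q. v$(1 + card B + q))"
  shows "\<forall>i<n. (\<Sum>i'<n. H$$(i,i') * X i') = 0" "\<forall>q<m. (\<Sum>i<n. A$$(q,i)*X i) = 0"
        "\<forall>q<m. (\<Sum>q'<m. M$$(q,q') * y q') = 0" "\<forall>i\<in>insert j B. (\<Sum>q<m. A$$(q,i) * y q) = 0"
proof -
  have fin: "finite B" using Bs finite_subset by blast
  have d: "distinct bs" and sb: "set bs = B" and lb: "length bs = card B"
    using fin bs by auto
  define p where "p = card B"
  define N where "N = 1 + p + m"
  define K where "K = kkt_mat H A M j B m"
  define L where "L = j # bs"
  have KN: "K = mat N N (\<lambda>(r, c).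
          if r < 1 + p \<and> c < 1 + p then H $$ (L!r, L!c)
          else if r < 1 + p then A $$ (c - 1 - p, L!r)
          else if c < 1 + p then A $$ (r - 1 - p, L!c)
          else - M $$ (r - 1 - p, c - 1 - p))"
    unfolding K_def kkt_mat_def Let_def N_def p_def L_def using bs lb
    by (auto intro!: cong_mat simp: nth_Cons')
  have Kr: "(K *\<^sub>v v) $ r = (\<Sum>c<N. K $$ (r,c) * v $ c)" if "r < N" for r
    using that v unfolding KN N_def p_def
    by (auto simp: scalar_prod_def lessThan_atLeast0 intro!: sum.cong)
  have jB: "j \<notin> set bs" "set bs \<subseteq> {..<n}" using Bs sb by auto
  have conv: "(\<Sum>c<1+p. g (L!c) * v$c) = (\<Sum>i<n. g i * X i)" for g
    unfolding X ext_sum[OF d jB(1) j jB(2)] L_def using lb p_def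
    by (simp del: sum.lessThan_Suc add: sum.lessThan_Suc_shift)
  define Hrow where "Hrow i = (\<Sum>i'<n. H$$(i,i') * X i')" for i
  define Acol where "Acol i = (\<Sum>q<m. A$$(q,i) * y q)" for i
  define Arow where "Arow q = (\<Sum>i<n. A$$(q,i) * X i)" for q
  define Mrow where "Mrow q = (\<Sum>q'<m. M$$(q,q') * y q')" for q
  have R1: "Hrow (L!r) + Acol (L!r) = 0" if r: "r < 1 + p" for r
  proof -
    have "0 = (K *\<^sub>v v) $ r" using Kv r unfolding K_def N_def p_def by simp
    also have "\<dots> = (\<Sum>c<N. K $$ (r,c) * v $ c)" using r Kr N_def by simp
    also have "\<dots> = (\<Sum>c<1+p. H$$(L!r, L!c) * v$c) + (\<Sum>q<m. A$$(q, L!r) * v$(1+p+q))"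
      unfolding N_def sum_split using r by (simp add: KN N_def)
    also have "\<dots> = Hrow (L!r) + Acol (L!r)"
      using conv[of "\<lambda>i. H$$(L!r,i)"] unfolding Hrow_def Acol_def y p_def by simp
    finally show ?thesis by simp
  qed
  have R2: "Arow q - Mrow q = 0" if q: "q < m" for q
  proof -
    have "0 = (K *\<^sub>v v) $ (1+p+q)" using Kv q unfolding K_def N_def p_def by simp
    also have "\<dots> = (\<Sum>c<N. K $$ (1+p+q,c) * v $ c)" using q Kr N_def by simp
    also have "\<dots> = (\<Sum>c<1+p. A$$(q, L!c) * v$c) + (\<Sum>q'<m. - M$$(q, q') * v$(1+p+q'))"
      unfolding N_def sum_split using q by (simp add: KN N_def)
    also have "\<dots> = Arow q - Mrow q"
      using conv[of "\<lambda>i. A$$(q,i)"] unfolding Arow_def Mrow_def y p_def by (simp add: sum_negf)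
    finally show ?thesis by simp
  qed
  have Lset: "\<exists>r<1+p. L!r = i" if "i \<in> insert j B" for i
  proof (cases "i = j")
    case True then show ?thesis unfolding L_def by auto
  next
    case False
    then have "i \<in> set bs" using that sb by auto
    then obtain c where "c < length bs" "bs!c = i" by (auto simp: in_set_conv_nth)
    then show ?thesis unfolding L_def using lb p_def by (intro exI[of _ "Suc c"]) auto
  qed
  have Xz: "X i = 0" if "i \<notin> insert j B" for i
    using that sb unfolding X ext_def by auto
  have s1: "(\<Sum>i<n. X i * (Hrow i + Acol i)) = 0"
    by (rule sum.neutral) (metis R1 Lset Xz mult_zero_left mult_zero_right)
  have s2: "(\<Sum>q<m. y q * (Arow q - Mrow q)) = 0"
    by (rule sum.neutral) (simp add: R2)
  have cr: "(\<Sum>i<n. X i * Acol i) = (\<Sum>q<m. y q * Arow q)"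
    unfolding Acol_def Arow_def sum_distrib_left
    by (subst sum.swap) (simp add: mult_ac)
  have "qf H n X + qf M m y = 0"
    using s1 s2 cr unfolding qf_def Hrow_def Mrow_def
    by (simp add: algebra_simps sum.distrib sum_subtractf)
  moreover have "0 \<le> qf H n X" "0 \<le> qf M m y" using psd_qf S SM by auto
  ultimately have "qf H n X = 0" "qf M m y = 0" by linarith+
  then have HX: "\<forall>i<n. Hrow i = 0" and My: "\<forall>q<m. Mrow q = 0"
    using psd_ker[OF S] psd_ker[OF SM] unfolding Hrow_def Mrow_def by auto
  show "\<forall>i<n. (\<Sum>i'<n. H$$(i,i') * X i') = 0" using HX Hrow_def by auto
  show "\<forall>q<m. (\<Sum>q'<m. M$$(q,q') * y q') = 0" using My Mrow_def by auto
  show "\<forall>q<m. (\<Sum>i<n. A$$(q,i)*X i) = 0" using R2 My Arow_def by auto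
  show "\<forall>i\<in>insert j B. (\<Sum>q<m. A$$(q,i) * y q) = 0"
  proof
    fix i assume i: "i \<in> insert j B"
    then have "i < n" using Bs j by auto
    from Lset[OF i] obtain r where "r < 1+p" "L!r = i" by auto
    with R1 HX \<open>i < n\<close> show "(\<Sum>q<m. A$$(q,i) * y q) = 0" unfolding Acol_def by force
  qed
qed

definition hrow :: "real mat \<Rightarrow> nat \<Rightarrow> nat \<Rightarrow> (nat \<Rightarrow> real) \<Rightarrow> real" where
  "hrow H n i X = (\<Sum>i'<n. H$$(i,i') * X i')"
definition acol :: "real mat \<Rightarrow> nat \<Rightarrow> nat \<Rightarrow> (nat \<Rightarrow> real) \<Rightarrow> real" where
  "acol A m i Y = (\<Sum>q<m. A$$(q,i) * Y q)"
definition arow :: "real mat \<Rightarrow> nat \<Rightarrow> nat \<Rightarrow> (nat \<Rightarrow> real) \<Rightarrow> real" where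
  "arow A n q X = (\<Sum>i<n. A$$(q,i) * X i)"
definition mrow :: "real mat \<Rightarrow> nat \<Rightarrow> nat \<Rightarrow> (nat \<Rightarrow> real) \<Rightarrow> real" where
  "mrow M m q Y = (\<Sum>q'<m. M$$(q,q') * Y q')"

lemma hrow_add: "hrow H n i (\<lambda>x. f x + g x) = hrow H n i f + hrow H n i g"
  unfolding hrow_def by (simp add: sum.distrib distrib_left)
lemma arow_add: "arow H n i (\<lambda>x. f x + g x) = arow H n i f + arow H n i g"
  unfolding arow_def by (simp add: sum.distrib distrib_left)
lemma hrow_div: "hrow H n i (\<lambda>x. f x / u) = hrow H n i f / u"
  unfolding hrow_def by (simp add: sum_divide_distrib)
lemma arow_div: "arow H n i (\<lambda>x. f x / u) = arow H n i f / u"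
  unfolding arow_def by (simp add: sum_divide_distrib)
lemma acol_vec_add: "dy \<in> carrier_vec m \<Longrightarrow> acol A m i (\<lambda>q. (dy + vec m y) $ q) = acol A m i (\<lambda>q. dy$q) + acol A m i y"
  unfolding acol_def by (simp add: sum.distrib distrib_left)
lemma mrow_vec_add: "dy \<in> carrier_vec m \<Longrightarrow> mrow A m i (\<lambda>q. (dy + vec m y) $ q) = mrow A m i (\<lambda>q. dy$q) + mrow A m i y"
  unfolding mrow_def by (simp add: sum.distrib distrib_left)
lemma acol_vec_scale: "acol A m i (\<lambda>q. vec m (\<lambda>q. - y q / c) $ q) = - acol A m i y / c"
  unfolding acol_def by (simp add: sum_divide_distrib sum_negf)
lemma mrow_vec_scale: "mrow A m i (\<lambda>q. vec m (\<lambda>q. - y q / c) $ q) = - mrow A m i y / c"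
  unfolding mrow_def by (simp add: sum_divide_distrib sum_negf)
lemma acol_zero: "acol A m i (\<lambda>q. 0\<^sub>v m $ q) = 0"
  unfolding acol_def by simp
lemma mrow_zero: "mrow A m i (\<lambda>q. 0\<^sub>v m $ q) = 0"
  unfolding mrow_def by simp

lemma pos_lt: "distinct bs \<Longrightarrow> i \<in> set bs \<Longrightarrow> pos bs i < length bs"
proof -
  assume d: "distinct bs" and i: "i \<in> set bs"
  then obtain c where "c < length bs" "bs ! c = i" by (auto simp: in_set_conv_nth)
  with pos_nth[OF d] show ?thesis by auto
qed

lemma ext_cong: "distinct bs \<Longrightarrow> (\<And>c. c < length bs \<Longrightarrow> f c = g c) \<Longrightarrow> ext j a bs f = ext j a bs g"
  unfolding ext_def by (auto intro!: ext simp: pos_lt)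
lemma ext_add: "ext j (a+b) bs (\<lambda>c. f c + g c) = (\<lambda>i. ext j a bs f i + ext j b bs g i)"
  unfolding ext_def by auto
lemma ext_scale: "u \<noteq> 0 \<Longrightarrow> ext j 1 bs (\<lambda>c. f c / u) = (\<lambda>i. ext j u bs f i / u)"
  unfolding ext_def by auto
lemma ext_zero: "ext j 0 bs (\<lambda>c. 0) = (\<lambda>i. 0)"
  unfolding ext_def by auto
lemma ext_swap0: "j \<notin> set bs \<Longrightarrow> j' \<notin> set bs \<Longrightarrow> ext j 0 bs f = ext j' 0 bs f"
  unfolding ext_def by auto

lemma step_iff:
  assumes S: "sym_psd H n" and ln: "l < n" and kn: "k < n" and lk: "l \<noteq> k"
    and Bs: "B \<subseteq> {0..<n} - {l, k}" and bs: "bs = sorted_list_of_set B"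
  shows "step_system H A M l k B m (dxl, 0, dxB, dy, dzl, dzk) \<longleftrightarrow>
   dxB \<in> carrier_vec (card B) \<and> dy \<in> carrier_vec m \<and>
   hrow H n l (ext l dxl bs (\<lambda>c. dxB$c)) - acol A m l (\<lambda>q. dy$q) - dzl = 0 \<and>
   hrow H n k (ext l dxl bs (\<lambda>c. dxB$c)) - acol A m k (\<lambda>q. dy$q) - dzk = 0 \<and>
   (\<forall>c<card B. hrow H n (bs!c) (ext l dxl bs (\<lambda>c. dxB$c)) - acol A m (bs!c) (\<lambda>q. dy$q) = 0) \<and>
   (\<forall>q<m. arow A n q (ext l dxl bs (\<lambda>c. dxB$c)) + mrow M m q (\<lambda>q. dy$q) = 0) \<and>
   dxl + dzl = 1"
proof -
  have fin: "finite B" using Bs finite_subset by blast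
  have d: "distinct bs" and sb: "set bs = B" and lb: "length bs = card B"
    using fin bs by auto
  have jB: "l \<notin> set bs" "set bs \<subseteq> {..<n}" using Bs sb by auto
  have bsn: "bs ! c < n" if "c < card B" for c
  proof -
    have "bs ! c \<in> set bs" using that lb by simp
    then show ?thesis using jB(2) by auto
  qed
  have hr: "hrow H n i (ext l dxl bs (\<lambda>c. dxB$c)) = H$$(i,l)*dxl + (\<Sum>c<card B. H$$(i, bs!c) * dxB$c)" for i
    unfolding hrow_def ext_sum[OF d jB(1) ln jB(2)] lb ..
  have ar: "arow A n q (ext l dxl bs (\<lambda>c. dxB$c)) = A$$(q,l)*dxl + (\<Sum>c<card B. A$$(q, bs!c) * dxB$c)" for q
    unfolding arow_def ext_sum[OF d jB(1) ln jB(2)] lb ..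
  have sy: "(\<Sum>c<card B. H$$(bs!c, i) * dxB$c) = (\<Sum>c<card B. H$$(i, bs!c) * dxB$c)" if i: "i < n" for i
  proof (rule sum.cong[OF refl])
    fix c assume "c \<in> {..<card B}"
    then have bc: "bs!c < n" using bsn by auto
    show "H$$(bs!c, i) * dxB$c = H$$(i, bs!c) * dxB$c" using sym_entry[OF S bc i] by simp
  qed
  have hkl: "H$$(k,l) = H$$(l,k)" using sym_entry[OF S] ln kn by auto
  show ?thesis
    unfolding step_system_def Let_def hr ar acol_def mrow_def bs[symmetric] lb
    using sy[OF ln] sy[OF kn] hkl by simp
qed


lemma inv_of_ker:
  fixes K :: "real mat"
  assumes K: "K \<in> carrier_mat N N" and ker: "\<And>v. v \<in> carrier_vec N \<Longrightarrow> K *\<^sub>v v = 0\<^sub>v N \<Longrightarrow> v = 0\<^sub>v N"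
  shows "invertible_mat K"
proof -
  have "det K \<noteq> 0" using det_0_iff_vec_prod_zero_field[OF K] ker by blast
  from det_non_zero_imp_unit[OF K this, of "()"]
  obtain B where B: "B \<in> carrier_mat N N" "B * K = 1\<^sub>m N" "K * B = 1\<^sub>m N"
    unfolding Units_def ring_mat_def by auto
  show ?thesis unfolding invertible_mat_def inverts_mat_def square_mat.simps
    using B K by auto
qed

lemma kkt_carrier: "finite B \<Longrightarrow> kkt_mat H A M j B m \<in> carrier_mat (1 + card B + m) (1 + card B + m)"
  unfolding kkt_mat_def Let_def by simp

lemma hrow_cross:
  assumes S: "sym_psd H n" and HX: "\<forall>i<n. hrow H n i X = 0"
  shows "(\<Sum>i<n. hrow H n i X0 * X i) = 0"
proof -
  have "(\<Sum>i<n. hrow H n i X0 * X i) = (\<Sum>i<n. \<Sum>i'<n. X0 i' * (H$$(i,i') * X i))"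
    unfolding hrow_def by (simp add: sum_distrib_left sum_distrib_right mult_ac)
  also have "\<dots> = (\<Sum>i'<n. \<Sum>i<n. X0 i' * (H$$(i,i') * X i))" by (rule sum.swap)
  also have "\<dots> = (\<Sum>i'<n. X0 i' * hrow H n i' X)"
    unfolding hrow_def sum_distrib_left
    by (intro sum.cong refl) (simp add: sym_entry[OF S])
  also have "\<dots> = 0" using HX by simp
  finally show ?thesis .
qed

lemma acol_cross:
  assumes AX: "\<forall>q<m. arow A n q X = 0"
  shows "(\<Sum>i<n. acol A m i Y * X i) = 0"
proof -
  have "(\<Sum>i<n. acol A m i Y * X i) = (\<Sum>i<n. \<Sum>q<m. Y q * (A$$(q,i) * X i))"
    unfolding acol_def by (simp add: sum_distrib_left sum_distrib_right mult_ac)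
  also have "\<dots> = (\<Sum>q<m. \<Sum>i<n. Y q * (A$$(q,i) * X i))" by (rule sum.swap)
  also have "\<dots> = (\<Sum>q<m. Y q * arow A n q X)"
    unfolding arow_def sum_distrib_left by simp
  also have "\<dots> = 0" using AX by simp
  finally show ?thesis .
qed

context
  fixes H M A :: "real mat" and n m l k :: nat and B :: "nat set" and bs
  assumes S: "sym_psd H n" and SM: "sym_psd M m" and A: "A \<in> carrier_mat m n"
    and ln: "l < n" and kn: "k < n" and lk: "l \<noteq> k"
    and Bs: "B \<subseteq> {0..<n} - {l, k}"
    and uniq: "\<exists>!s. step_system H A M l k B m s"
    and nz: "\<forall>dxl dxk dxB dy dzl dzk.
           step_system H A M l k B m (dxl, dxk, dxB, dy, dzl, dzk) \<longrightarrow> dzk \<noteq> 0"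
    and bs: "bs = sorted_list_of_set B"
begin

lemma basics: "finite B" "distinct bs" "set bs = B" "length bs = card B" "l \<notin> set bs" "k \<notin> set bs"
   "set bs \<subseteq> {..<n}" "\<forall>c<card B. bs!c < n" "\<forall>c<card B. bs!c \<in> B"
proof -
  show fin: "finite B" using Bs finite_subset by blast
  show d: "distinct bs" and sb: "set bs = B" and lb: "length bs = card B"
    using fin bs by auto
  show "l \<notin> set bs" "k \<notin> set bs" "set bs \<subseteq> {..<n}" using Bs sb by auto
  show "\<forall>c<card B. bs!c \<in> B"
  proof (intro allI impI)
    fix c assume "c < card B"
    then have "bs ! c \<in> set bs" using lb by simp
    then show "bs!c \<in> B" using sb by simp
  qed
  then show "\<forall>c<card B. bs!c < n" using Bs by auto
qed

lemmas SI = step_iff[OF S ln kn lk Bs bs]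

lemma s0: obtains dxl0 dxB0 dy0 dzl0 dzk0 where
  "step_system H A M l k B m (dxl0, 0, dxB0, dy0, dzl0, dzk0)"
  "\<And>s. step_system H A M l k B m s \<Longrightarrow> s = (dxl0, 0, dxB0, dy0, dzl0, dzk0)"
proof -
  from uniq obtain s where s: "step_system H A M l k B m s"
    and u: "\<And>s'. step_system H A M l k B m s' \<Longrightarrow> s' = s" by blast
  obtain a b c d e f where sd: "s = (a,b,c,d,e,f)" by (cases s) auto
  have "b = 0" using s unfolding sd step_system_def Let_def by simp
  then show ?thesis using that s u sd by blast
qed

lemma y_zero: assumes a1: "acol A m l y = 0" and a2: "\<forall>i\<in>B. acol A m i y = 0"
  and a3: "\<forall>q<m. mrow M m q y = 0" shows "\<forall>q<m. y q = 0"
proof -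
  obtain dxl0 dxB0 dy0 dzl0 dzk0 where st: "step_system H A M l k B m (dxl0, 0, dxB0, dy0, dzl0, dzk0)"
    and un: "\<And>s. step_system H A M l k B m s \<Longrightarrow> s = (dxl0, 0, dxB0, dy0, dzl0, dzk0)"
    using s0 by blast
  have dy0: "dy0 \<in> carrier_vec m" using st SI by blast
  have a2': "\<forall>c<card B. acol A m (bs!c) y = 0" using a2 basics(9) by auto
  have "step_system H A M l k B m (dxl0, 0, dxB0, dy0 + vec m y, dzl0, dzk0 - acol A m k y)"
    using st a1 a2' a3 dy0 unfolding SI by (simp add: acol_vec_add mrow_vec_add)
  from un[OF this] have "dy0 + vec m y = dy0" by simp
  show ?thesis
  proof (intro allI impI)
    fix q assume q: "q < m"
    from arg_cong[OF \<open>dy0 + vec m y = dy0\<close>, of "\<lambda>v. v$q"] show "y q = 0" using dy0 q by simp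
  qed
qed


lemma w_zero: assumes a1: "\<forall>i<n. hrow H n i (ext l 0 bs w) = 0"
  and a2: "\<forall>q<m. arow A n q (ext l 0 bs w) = 0" shows "\<forall>c<card B. w c = 0"
proof -
  obtain dxl0 dxB0 dy0 dzl0 dzk0 where st: "step_system H A M l k B m (dxl0, 0, dxB0, dy0, dzl0, dzk0)"
    and un: "\<And>s. step_system H A M l k B m s \<Longrightarrow> s = (dxl0, 0, dxB0, dy0, dzl0, dzk0)"
    using s0 by blast
  have dxB0: "dxB0 \<in> carrier_vec (card B)" using st SI by blast
  have e: "ext l dxl0 bs (\<lambda>c. (dxB0 + vec (card B) w) $ c)
     = (\<lambda>i. ext l dxl0 bs (\<lambda>c. dxB0 $ c) i + ext l 0 bs w i)"
  proof -
    have "ext l dxl0 bs (\<lambda>c. (dxB0 + vec (card B) w) $ c) = ext l dxl0 bs (\<lambda>c. dxB0 $ c + w c)"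
      by (rule ext_cong) (use basics dxB0 in auto)
    then show ?thesis using ext_add[of l dxl0 0 bs "\<lambda>c. dxB0 $ c" w] by simp
  qed
  have "step_system H A M l k B m (dxl0, 0, dxB0 + vec (card B) w, dy0, dzl0, dzk0)"
    using st a1 a2 dxB0 basics(8) ln kn unfolding SI e hrow_add arow_add by simp
  from un[OF this] have "dxB0 + vec (card B) w = dxB0" by simp
  then have "\<forall>c<card B. (dxB0 + vec (card B) w) $ c = dxB0 $ c" by simp
  then show ?thesis using dxB0 by simp
qed

lemma Kl_inv: "invertible_mat (kkt_mat H A M l B m)"
proof (rule inv_of_ker[OF kkt_carrier[OF basics(1)]])
  fix v assume v: "v \<in> carrier_vec (1 + card B + m)"
    and Kv: "kkt_mat H A M l B m *\<^sub>v v = 0\<^sub>v (1 + card B + m)"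
  define u where "u = v$0"
  define w where "w = (\<lambda>c. v$(1+c))"
  define y where "y = (\<lambda>q. v$(1+card B+q))"
  have Bsl: "B \<subseteq> {0..<n} - {l}" using Bs by auto
  note K = kkt_ker[OF S SM A ln Bsl v Kv bs, of "ext l u bs w" y, OF _ y_def]
  have HX: "\<forall>i<n. hrow H n i (ext l u bs w) = 0" and AX: "\<forall>q<m. arow A n q (ext l u bs w) = 0"
    and My: "\<forall>q<m. mrow M m q y = 0" and Ay: "\<forall>i\<in>insert l B. acol A m i y = 0"
    unfolding hrow_def arow_def mrow_def acol_def using K unfolding u_def w_def by auto
  have y0: "\<forall>q<m. y q = 0" using y_zero Ay My by auto
  have u0: "u = 0"
  proof (rule ccontr)
    assume u: "u \<noteq> 0"
    have e: "ext l 1 bs (\<lambda>c. vec (card B) (\<lambda>c. w c / u) $ c) = (\<lambda>i. ext l u bs w i / u)"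
    proof -
      have "ext l 1 bs (\<lambda>c. vec (card B) (\<lambda>c. w c / u) $ c) = ext l 1 bs (\<lambda>c. w c / u)"
        by (rule ext_cong) (use basics in auto)
      then show ?thesis using ext_scale[OF u] by simp
    qed
    have "step_system H A M l k B m (1, 0, vec (card B) (\<lambda>c. w c / u), 0\<^sub>v m, 0, 0)"
      unfolding SI e hrow_div arow_div acol_zero mrow_zero using HX AX basics(8) ln kn by simp
    then show False using nz by blast
  qed
  have w0: "\<forall>c<card B. w c = 0" using w_zero HX AX u0 by simp
  show "v = 0\<^sub>v (1 + card B + m)"
  proof (rule eq_vecI)
    show "dim_vec v = dim_vec (0\<^sub>v (1 + card B + m))" using v by simp
    fix c assume "c < dim_vec (0\<^sub>v (1 + card B + m))"
    then have c: "c < 1 + card B + m" by simp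
    consider "c = 0" | "0 < c" "c < 1 + card B" | "1 + card B \<le> c" by linarith
    then show "v $ c = 0\<^sub>v (1 + card B + m) $ c"
    proof cases
      case 1 then show ?thesis using u0 c u_def by simp
    next
      case 2 then show ?thesis using w0[rule_format, of "c - 1"] c w_def by simp
    next
      case 3 then show ?thesis using y0[rule_format, of "c - 1 - card B"] c y_def by simp
    qed
  qed
qed


lemma Kk_inv: "invertible_mat (kkt_mat H A M k B m)"
proof (rule inv_of_ker[OF kkt_carrier[OF basics(1)]])
  fix v assume v: "v \<in> carrier_vec (1 + card B + m)"
    and Kv: "kkt_mat H A M k B m *\<^sub>v v = 0\<^sub>v (1 + card B + m)"
  define u where "u = v$0"
  define w where "w = (\<lambda>c. v$(1+c))"
  define y where "y = (\<lambda>q. v$(1+card B+q))"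
  have Bsk: "B \<subseteq> {0..<n} - {k}" using Bs by auto
  note K = kkt_ker[OF S SM A kn Bsk v Kv bs, of "ext k u bs w" y, OF _ y_def]
  have HX: "\<forall>i<n. hrow H n i (ext k u bs w) = 0" and AX: "\<forall>q<m. arow A n q (ext k u bs w) = 0"
    and My: "\<forall>q<m. mrow M m q y = 0" and Ay: "\<forall>i\<in>insert k B. acol A m i y = 0"
    unfolding hrow_def arow_def mrow_def acol_def using K unfolding u_def w_def by auto
  have u0: "u = 0"
  proof -
    obtain dxl0 dxB0 dy0 dzl0 dzk0 where st: "step_system H A M l k B m (dxl0, 0, dxB0, dy0, dzl0, dzk0)"
      and un: "\<And>s. step_system H A M l k B m s \<Longrightarrow> s = (dxl0, 0, dxB0, dy0, dzl0, dzk0)"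
      using s0 by blast
    have nz0: "dzk0 \<noteq> 0" using nz st by blast
    define X0 where "X0 = ext l dxl0 bs (\<lambda>c. dxB0$c)"
    define Y0 where "Y0 = (\<lambda>q. dy0 $ q)"
    define f where "f i = hrow H n i X0 - acol A m i Y0" for i
    have e2: "f k = dzk0" and e3: "\<forall>c<card B. f (bs!c) = 0"
      using st unfolding SI f_def X0_def Y0_def by auto
    have "(\<Sum>i<n. f i * ext k u bs w i) = f k * u + (\<Sum>c<length bs. f (bs!c) * w c)"
      by (rule ext_sum) (use basics kn in auto)
    also have "\<dots> = dzk0 * u" using e2 e3 basics(4) by simp
    finally have 1: "(\<Sum>i<n. f i * ext k u bs w i) = dzk0 * u" .
    have "(\<Sum>i<n. f i * ext k u bs w i) = (\<Sum>i<n. hrow H n i X0 * ext k u bs w i)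
        - (\<Sum>i<n. acol A m i Y0 * ext k u bs w i)"
      unfolding f_def by (simp add: left_diff_distrib sum_subtractf)
    also have "\<dots> = 0" using hrow_cross[OF S HX] acol_cross[OF AX] by simp
    finally show ?thesis using 1 nz0 by simp
  qed
  have Al: "acol A m l y = 0"
  proof (rule ccontr)
    assume cc: "acol A m l y \<noteq> 0"
    have e: "ext l 0 bs (\<lambda>c. 0\<^sub>v (card B) $ c) = (\<lambda>i. 0)"
    proof -
      have "ext l 0 bs (\<lambda>c. 0\<^sub>v (card B) $ c) = ext l 0 bs (\<lambda>c. 0)"
        by (rule ext_cong) (use basics in auto)
      then show ?thesis using ext_zero by simp
    qed
    have z: "hrow H n i (\<lambda>i. 0) = 0" "arow A n q (\<lambda>i. 0) = 0" for i q
      unfolding hrow_def arow_def by simp_all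
    have Ak: "acol A m k y = 0" using Ay by simp
    have AB: "\<forall>c<card B. acol A m (bs!c) y = 0" using Ay basics(9) by auto
    have "step_system H A M l k B m (0, 0, 0\<^sub>v (card B), vec m (\<lambda>q. - y q / acol A m l y), 1, 0)"
      unfolding SI e z acol_vec_scale mrow_vec_scale using cc Ak AB My by simp
    then show False using nz by blast
  qed
  have y0: "\<forall>q<m. y q = 0" using y_zero Al Ay My by auto
  have w0: "\<forall>c<card B. w c = 0"
    using w_zero HX AX u0 ext_swap0[of l bs k w] basics(5,6) by simp
  show "v = 0\<^sub>v (1 + card B + m)"
  proof (rule eq_vecI)
    show "dim_vec v = dim_vec (0\<^sub>v (1 + card B + m))" using v by simp
    fix c assume "c < dim_vec (0\<^sub>v (1 + card B + m))"
    then have c: "c < 1 + card B + m" by simp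
    consider "c = 0" | "0 < c" "c < 1 + card B" | "1 + card B \<le> c" by linarith
    then show "v $ c = 0\<^sub>v (1 + card B + m) $ c"
    proof cases
      case 1 then show ?thesis using u0 c u_def by simp
    next
      case 2 then show ?thesis using w0[rule_format, of "c - 1"] c w_def by simp
    next
      case 3 then show ?thesis using y0[rule_format, of "c - 1 - card B"] c y_def by simp
    qed
  qed
qed

end

theorem proposition10:
  fixes H M A :: "real mat" and n m l k :: nat and B :: "nat set"
  assumes "sym_psd H n" and "sym_psd M m" and "A \<in> carrier_mat m n"
    and "l < n" and "k < n" and "l \<noteq> k"
    and "B \<subseteq> {0..<n} - {l, k}"
    and "\<exists>!s. step_system H A M l k B m s"
    and "\<forall>dxl dxk dxB dy dzl dzk.
           step_system H A M l k B m (dxl, dxk, dxB, dy, dzl, dzk) \<longrightarrow> dzk \<noteq> 0"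
  shows "invertible_mat (kkt_mat H A M l B m) \<and> invertible_mat (kkt_mat H A M k B m)"
  using Kl_inv[OF assms refl] Kk_inv[OF assms refl] by blast

end
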